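(* Let $\mathcal{X}$ (with metric $d_{\mathcal X}$) and $\Theta$ be compact metric spaces and let $f_\theta:\mathcal{X}\to\mathbb{R}^p$, $\theta\in\Theta$, be functions such that for each $\theta$ the image $f_\theta(\mathcal{X})$ spans $\mathbb{R}^p$ and $(x,\theta)\mapsto f_\theta(x)$ is continuous on $\mathcal{X}\times\Theta$. Suppose $p\ge 2$. Let $n_{\rm st}\in\mathbb{N}$ and $x_1,\ldots,x_{n_{\rm st}}\in\mathcal{X}$ be such that $M(\xi_{n_{\rm st}},\theta)$ is positive definite for all $\theta\in\Theta$, where $\xi_n=\frac1n\sum_{i=1}^n\delta_{x_i}$. Let $(\theta_n)_{n\ge n_{\rm st}}$ be an arbitrary sequence in $\Theta$, and let the points $x_{n+1}$, $n\ge n_{\rm st}$, be defined recursively by $$x_{n+1}\in\arg\max_{x\in\mathcal{X}} f_{\theta_n}^{\mathsf T}(x)\,M^{-1}(\xi_n,\theta_n)\,f_{\theta_n}(x).$$ Let $\varepsilon>0$ be given. Then there exist $d>0$ and $n_0\ge n_{\rm st}$ such that $\xi_n(S)\le \frac1p+\varepsilon$ for all nonempty $S\subseteq\mathcal{X}$ with $\mathrm{diam}(S)\le d$ and all $n\ge n_0$.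
   Context: A design is a finitely supported probability measure on $\mathcal{X}$; $\delta_x$ is the point mass at $x$. The information matrix of a design $\xi$ at $\theta$ is $M(\xi,\theta)=\sum_{x\in\mathrm{supp}(\xi)}\xi(x)f_\theta(x)f_\theta^{\mathsf T}(x)$ (it is positive definite for all $\xi_n$, $n\ge n_{\rm st}$, by the choice of the starting points). $\mathrm{diam}(S)=\sup\{d_{\mathcal X}(x,z):x,z\in S\}$. The recursion is the (deterministic path of the) adaptive Wynn algorithm with arbitrary parameter estimates $\theta_n$. *)

theory Defs
  imports "HOL-Analysis.Analysis"
begin

definition emp_design :: "(nat \<Rightarrow> 'a) \<Rightarrow> nat \<Rightarrow> 'a set \<Rightarrow> real" where
  "emp_design x n S = real (card {i \<in> {1..n}. x i \<in> S}) / real n"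

definition outer :: "real^'p \<Rightarrow> real^'p^'p" where
  "outer v = (\<chi> i j. v $ i * v $ j)"

definition info_matrix :: "('b \<Rightarrow> 'a \<Rightarrow> real^'p) \<Rightarrow> (nat \<Rightarrow> 'a) \<Rightarrow> nat \<Rightarrow> 'b \<Rightarrow> real^'p^'p" where
  "info_matrix f x n \<theta> =
     (\<Sum>z\<in>x ` {1..n}. (emp_design x n {z}) *\<^sub>R outer (f \<theta> z))"

definition pos_def :: "real^'p^'p \<Rightarrow> bool" where
  "pos_def A \<longleftrightarrow> (\<forall>v. v \<noteq> 0 \<longrightarrow> v \<bullet> (A *v v) > 0)"

end

theory Submission
  imports Defs
begin

lemma info_sum: "info_matrix f x n t = (\<Sum>i\<in>{1..n}. (1/real n) *\<^sub>R outer (f t (x i)))"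
proof -
  have "(\<Sum>i\<in>{1..n}. (1/real n) *\<^sub>R outer (f t (x i))) = (\<Sum>z\<in>x`{1..n}. \<Sum>i\<in>{i\<in>{1..n}. x i = z}. (1/real n) *\<^sub>R outer (f t (x i)))"
    by (rule sum.image_gen) simp
  also have "\<dots> = (\<Sum>z\<in>x`{1..n}. emp_design x n {z} *\<^sub>R outer (f t z))"
  proof (rule sum.cong[OF refl])
    fix z assume "z \<in> x`{1..n}"
    have "(\<Sum>i\<in>{i\<in>{1..n}. x i = z}. (1/real n) *\<^sub>R outer (f t (x i))) = (\<Sum>i\<in>{i\<in>{1..n}. x i = z}. (1/real n) *\<^sub>R outer (f t z))"
      by (rule sum.cong) auto
    also have "\<dots> = emp_design x n {z} *\<^sub>R outer (f t z)"
      by (simp only: sum_constant_scaleR) (simp add: emp_design_def)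
    finally show "(\<Sum>i\<in>{i\<in>{1..n}. x i = z}. (1/real n) *\<^sub>R outer (f t (x i))) = emp_design x n {z} *\<^sub>R outer (f t z)" .
  qed
  finally show ?thesis unfolding info_matrix_def by simp
qed

lemma info_comp: "info_matrix f x n t $ j $ k = (\<Sum>i\<in>{1..n}. f t (x i) $ j * f t (x i) $ k) / real n"
  unfolding info_sum outer_def by (simp add: sum_component sum_divide_distrib)

lemma info_bil: "y \<bullet> (info_matrix f x n t *v z) = (\<Sum>i\<in>{1..n}. (y \<bullet> f t (x i)) * (z \<bullet> f t (x i))) / real n"
proof -
  have "y \<bullet> (info_matrix f x n t *v z) = (\<Sum>j\<in>UNIV. \<Sum>k\<in>UNIV. \<Sum>i\<in>{1..n}. y$j * f t (x i) $ j * (z$k * f t (x i) $ k) / real n)"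
    by (simp add: inner_vec_def matrix_vector_mult_def info_comp sum_distrib_left sum_distrib_right sum_divide_distrib mult_ac)
  also have "\<dots> = (\<Sum>j\<in>UNIV. \<Sum>i\<in>{1..n}. \<Sum>k\<in>UNIV. y$j * f t (x i) $ j * (z$k * f t (x i) $ k) / real n)"
    by (rule sum.cong[OF refl], rule sum.swap)
  also have "\<dots> = (\<Sum>i\<in>{1..n}. \<Sum>j\<in>UNIV. \<Sum>k\<in>UNIV. y$j * f t (x i) $ j * (z$k * f t (x i) $ k) / real n)"
    by (rule sum.swap)
  also have "\<dots> = (\<Sum>i\<in>{1..n}. (y \<bullet> f t (x i)) * (z \<bullet> f t (x i))) / real n"
    by (simp add: inner_vec_def sum_divide_distrib sum_product)
  finally show ?thesis .
qed

lemma info_trace: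
  fixes N :: "real^'p^'p" and f :: "'b \<Rightarrow> 'a \<Rightarrow> real^'p"
  assumes "N ** info_matrix f x n t = mat 1" "n > 0"
  shows "(\<Sum>i\<in>{1..n}. f t (x i) \<bullet> (N *v f t (x i))) = real n * real CARD('p)"
proof -
  let ?F = "\<lambda>i. f t (x i)"
  let ?M = "info_matrix f x n t"
  have "(\<Sum>i\<in>{1..n}. ?F i \<bullet> (N *v ?F i)) = (\<Sum>i\<in>{1..n}. \<Sum>j\<in>UNIV. \<Sum>k\<in>UNIV. N$j$k * (?F i$j * ?F i$k))"
    by (simp add: inner_vec_def matrix_vector_mult_def sum_distrib_left mult_ac)
  also have "\<dots> = (\<Sum>j\<in>UNIV. \<Sum>i\<in>{1..n}. \<Sum>k\<in>UNIV. N$j$k * (?F i$j * ?F i$k))"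
    by (rule sum.swap)
  also have "\<dots> = (\<Sum>j\<in>UNIV. \<Sum>k\<in>UNIV. \<Sum>i\<in>{1..n}. N$j$k * (?F i$j * ?F i$k))"
    by (rule sum.cong[OF refl], rule sum.swap)
  also have "\<dots> = (\<Sum>j\<in>UNIV. \<Sum>k\<in>UNIV. real n * (N$j$k * ?M$k$j))"
    using assms(2) by (intro sum.cong refl) (simp add: info_comp sum_distrib_left[symmetric] mult.commute)
  also have "\<dots> = real n * (\<Sum>j\<in>UNIV. (N ** ?M)$j$j)"
    by (simp add: matrix_matrix_mult_def sum_distrib_left)
  also have "\<dots> = real n * real CARD('p)"
    using assms(1) by (simp add: mat_def)
  finally show ?thesis .
qed


lemma lam_exists:
  fixes f :: "'b::metric_space \<Rightarrow> 'a::metric_space \<Rightarrow> real^'p"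
  assumes "compact \<Theta>" "\<Theta> \<noteq> {}" "continuous_on (X \<times> \<Theta>) (\<lambda>(z,t). f t z)"
    "\<And>i. i\<in>{1..m} \<Longrightarrow> x i \<in> X"
    "\<And>t v. t\<in>\<Theta> \<Longrightarrow> v \<noteq> 0 \<Longrightarrow> (\<Sum>i\<in>{1..m}. (v \<bullet> f t (x i))^2) > 0"
  shows "\<exists>lam>0. \<forall>t\<in>\<Theta>. \<forall>v. lam * (norm v)^2 \<le> (\<Sum>i\<in>{1..m}. (v \<bullet> f t (x i))^2)"
proof -
  define h where "h = (\<lambda>q::'b \<times> (real^'p). \<Sum>i\<in>{1..m}. (snd q \<bullet> f (fst q) (x i))^2)"
  have ci: "continuous_on (\<Theta> \<times> sphere 0 1) (\<lambda>q::'b \<times> (real^'p). f (fst q) (x i))" if "i\<in>{1..m}" for i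
  proof -
    have "continuous_on (\<Theta> \<times> sphere 0 1) (\<lambda>q::'b \<times> (real^'p). (\<lambda>(z,t). f t z) (x i, fst q))"
      by (rule continuous_on_compose2[OF assms(3)]) (use assms(4)[OF that] in \<open>auto intro!: continuous_intros\<close>)
    then show ?thesis by simp
  qed
  have cont: "continuous_on (\<Theta> \<times> sphere 0 1) h"
    unfolding h_def by (intro continuous_intros ci)
  have cpt: "compact (\<Theta> \<times> sphere (0::real^'p) 1)"
    by (intro compact_Times assms(1) compact_sphere)
  obtain k :: 'p where True by simp
  have "axis k (1::real) \<in> sphere (0::real^'p) 1" by (simp add: norm_axis_1)
  then have ne: "\<Theta> \<times> sphere (0::real^'p) 1 \<noteq> {}" using assms(2) by auto
  obtain q0 where q0: "q0 \<in> \<Theta> \<times> sphere 0 1" "\<And>q. q \<in> \<Theta> \<times> sphere 0 1 \<Longrightarrow> h q0 \<le> h q"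
    using continuous_attains_inf[OF cpt ne cont] by blast
  have "snd q0 \<noteq> 0" using q0(1) by auto
  then have pos: "h q0 > 0" unfolding h_def using assms(5) q0(1) by (cases q0) auto
  have "lam' * (norm v)^2 \<le> (\<Sum>i\<in>{1..m}. (v \<bullet> f t (x i))^2)" if "t \<in> \<Theta>" "lam' = h q0" for t v lam'
  proof (cases "v = 0")
    case True then show ?thesis by (simp add: sum_nonneg)
  next
    case False
    define w where "w = v /\<^sub>R norm v"
    have w: "(t, w) \<in> \<Theta> \<times> sphere 0 1" using False that by (simp add: w_def)
    have v: "v = norm v *\<^sub>R w" using False by (simp add: w_def)
    have "(\<Sum>i\<in>{1..m}. (v \<bullet> f t (x i))^2) = (norm v)^2 * h (t, w)"
      unfolding h_def by (subst v) (simp add: power_mult_distrib sum_distrib_left)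
    moreover have "h q0 \<le> h (t, w)" using q0(2)[OF w] .
    ultimately show ?thesis using that by (simp add: mult_right_mono mult.commute)
  qed
  then show ?thesis using pos by blast
qed


lemma unif_f:
  fixes f :: "'b::metric_space \<Rightarrow> 'a::metric_space \<Rightarrow> real^'p"
  assumes "compact X" "compact \<Theta>" "continuous_on (X \<times> \<Theta>) (\<lambda>(z,t). f t z)" "\<eta> > 0"
  shows "\<exists>\<delta>>0. \<forall>t\<in>\<Theta>. \<forall>y\<in>X. \<forall>z\<in>X. dist y z < \<delta> \<longrightarrow> norm (f t y - f t z) < \<eta>"
proof -
  have "uniformly_continuous_on (X \<times> \<Theta>) (\<lambda>(z,t). f t z)"
    by (rule compact_uniformly_continuous[OF assms(3)]) (intro compact_Times assms(1,2))
  then obtain \<delta> where d: "\<delta> > 0" and H: "\<forall>a\<in>X \<times> \<Theta>. \<forall>a'\<in>X \<times> \<Theta>. dist a' a < \<delta> \<longrightarrow> dist ((\<lambda>(z,t). f t z) a') ((\<lambda>(z,t). f t z) a) < \<eta>"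
    unfolding uniformly_continuous_on_def using assms(4) by blast
  have "norm (f t y - f t z) < \<eta>" if "t\<in>\<Theta>" "y\<in>X" "z\<in>X" "dist y z < \<delta>" for t y z
  proof -
    have "dist (y,t) (z,t) = dist y z" by (simp add: dist_Pair_Pair)
    then show ?thesis using H that by (auto simp: dist_norm)
  qed
  then show ?thesis using d by blast
qed


lemma key:
  fixes f :: "'b \<Rightarrow> 'a \<Rightarrow> real^'p"
  assumes npos: "nst > 0" and nn: "nst \<le> n"
    and lam: "lam > 0" and lamH: "\<And>v. lam * (norm v)^2 \<le> (\<Sum>i\<in>{1..nst}. (v \<bullet> f t (x i))^2)"
    and xin: "\<And>i. i\<in>{1..n} \<Longrightarrow> x i \<in> X"
    and amax: "\<forall>y\<in>X. f t y \<bullet> (matrix_inv (info_matrix f x n t) *v f t y)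
                 \<le> f t z \<bullet> (matrix_inv (info_matrix f x n t) *v f t z)"
    and close: "\<And>i. i \<in> {1..n} \<Longrightarrow> x i \<in> S \<Longrightarrow> norm (f t z - f t (x i)) < \<eta>"
    and eta: "\<eta> = \<rho> * sqrt (lam / real nst)" and rho: "0 \<le> \<rho>" "\<rho> \<le> 1/2"
  shows "real (card {i\<in>{1..n}. x i \<in> S}) * real CARD('p) * (1 - 2*\<rho>) \<le> real n"
proof -
  define M where "M = info_matrix f x n t"
  define F where "F = (\<lambda>i. f t (x i))"
  define Q where "Q = (\<lambda>v. \<Sum>i\<in>{1..n}. (v \<bullet> F i)^2)"
  define u where "u = f t z"
  have n0: "n > 0" using npos nn by simp
  have bil: "y \<bullet> (M *v w) = (\<Sum>i\<in>{1..n}. (y \<bullet> F i) * (w \<bullet> F i)) / real n" for y w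
    unfolding M_def F_def by (rule info_bil)
  have quad: "v \<bullet> (M *v v) = Q v / real n" for v
    unfolding bil Q_def by (simp add: power2_eq_square)
  have Qnn: "Q v \<ge> 0" for v unfolding Q_def by (simp add: sum_nonneg)
  have sub: "{1..nst} \<subseteq> {1..n}" using nn by auto
  have Qge: "(\<Sum>i\<in>{1..nst}. (v \<bullet> F i)^2) \<le> Q v" for v
    unfolding Q_def by (rule sum_mono2[OF _ sub]) auto
  have ker: "M *v v = 0 \<Longrightarrow> v = 0" for v
  proof -
    assume "M *v v = 0"
    then have "Q v = 0" using quad[of v] n0 by simp
    then have "lam * (norm v)^2 \<le> 0" using lamH[of v] Qge[of v] unfolding F_def by linarith
    then show "v = 0" using lam by (simp add: mult_le_0_iff)
  qed
  have inv: "invertible M"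
    unfolding invertible_left_inverse using matrix_left_invertible_ker[of M] ker by blast
  define N where "N = matrix_inv M"
  have NM: "N ** M = mat 1" and MN: "M ** N = mat 1"
    using someI_ex[OF inv[unfolded invertible_def]] unfolding N_def matrix_inv_def by auto
  define a where "a = N *v u"
  define D where "D = u \<bullet> a"
  have Ma: "M *v a = u" by (simp add: a_def matrix_vector_mul_assoc MN)
  have Dq: "D = Q a / real n"
    using quad[of a] unfolding Ma D_def by (simp add: inner_commute)
  have D0: "D \<ge> 0" using Dq Qnn by simp
  have amax': "F i \<bullet> (N *v F i) \<le> D" if "i \<in> {1..n}" for i
    using amax xin[OF that] unfolding F_def N_def M_def D_def a_def u_def by blast
  have afy: "(a \<bullet> f t y)^2 \<le> D * D" if y: "y \<in> X" for y
  proof -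
    define g where "g = N *v f t y"
    have Mg: "M *v g = f t y" by (simp add: g_def matrix_vector_mul_assoc MN)
    have "a \<bullet> f t y = (\<Sum>i\<in>{1..n}. (a \<bullet> F i) * (g \<bullet> F i)) / real n"
      using bil[of a g] by (simp add: Mg)
    then have "(a \<bullet> f t y)^2 = (\<Sum>i\<in>{1..n}. (a \<bullet> F i) * (g \<bullet> F i))^2 / (real n)^2"
      by (simp add: power_divide)
    also have "\<dots> \<le> (Q a * Q g) / (real n)^2"
      unfolding Q_def by (intro divide_right_mono Cauchy_Schwarz_ineq_sum) simp
    also have "\<dots> = D * (Q g / real n)"
      using Dq n0 by (simp add: power2_eq_square)
    also have "Q g / real n = f t y \<bullet> (N *v f t y)"
      using quad[of g] Mg by (simp add: g_def inner_commute)
    also have "f t y \<bullet> (N *v f t y) \<le> D"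
      using amax y unfolding N_def M_def D_def a_def u_def by blast
    finally show ?thesis using D0 by (simp add: mult_left_mono)
  qed
  have Dp: "real CARD('p) \<le> D"
  proof -
    have "real n * real CARD('p) = (\<Sum>i\<in>{1..n}. F i \<bullet> (N *v F i))"
      using info_trace[OF NM[unfolded M_def] n0] unfolding F_def by simp
    also have "\<dots> \<le> real n * D"
      using sum_bounded_above[of "{1..n}" "\<lambda>i. F i \<bullet> (N *v F i)" D] amax' by simp
    finally show ?thesis using n0 by simp
  qed
  have anorm: "lam * (norm a)^2 \<le> real nst * (D * D)"
  proof -
    have "(\<Sum>i\<in>{1..nst}. (a \<bullet> F i)^2) \<le> real nst * (D * D)"
      using sum_bounded_above[of "{1..nst}" "\<lambda>i. (a \<bullet> F i)^2" "D * D"] afy xin sub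
      unfolding F_def by fastforce
    then show ?thesis using lamH[of a] unfolding F_def by linarith
  qed
  define K where "K = {i\<in>{1..n}. x i \<in> S}"
  have lowi: "D * D * (1 - 2*\<rho>) \<le> (a \<bullet> F i)^2" if i: "i \<in> K" for i
  proof -
    define e where "e = u - F i"
    have ne: "norm e < \<eta>" using close i unfolding K_def e_def u_def F_def by blast
    have "(a \<bullet> e)^2 \<le> (norm a)^2 * (norm e)^2"
      by (metis Cauchy_Schwarz_ineq2 abs_ge_zero power_mono power_mult_distrib power2_abs)
    also have "\<dots> \<le> (real nst * (D * D) / lam) * (\<rho>^2 * (lam / real nst))"
    proof (rule mult_mono)
      show "(norm a)^2 \<le> real nst * (D * D) / lam" using anorm lam by (simp add: field_simps)
      have "(norm e)^2 \<le> \<eta>^2" using ne by (intro power_mono) auto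
      also have "\<eta>^2 = \<rho>^2 * (lam / real nst)" using eta lam npos by (simp add: power_mult_distrib)
      finally show "(norm e)^2 \<le> \<rho>^2 * (lam / real nst)" .
    qed (use lam npos in auto)
    also have "\<dots> = (D * \<rho>)^2" using lam npos by (simp add: field_simps power2_eq_square)
    finally have "(a \<bullet> e)^2 \<le> (D * \<rho>)^2" .
    then have ae: "a \<bullet> e \<le> D * \<rho>"
      using D0 rho power2_le_imp_le[of "a \<bullet> e" "D * \<rho>"] by simp
    have "a \<bullet> F i = D - a \<bullet> e" unfolding e_def D_def by (simp add: inner_diff_right inner_commute)
    then have ge: "a \<bullet> F i \<ge> D * (1 - \<rho>)" using ae by (simp add: algebra_simps)
    have "D * (1 - \<rho>) \<ge> 0" using D0 rho by simp
    then have "(D * (1 - \<rho>))^2 \<le> (a \<bullet> F i)^2" using ge by (intro power_mono) auto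
    moreover have "D * D * (1 - 2*\<rho>) \<le> (D * (1 - \<rho>))^2"
      using mult_nonneg_nonneg[OF D0 mult_nonneg_nonneg[OF D0 mult_nonneg_nonneg[OF rho(1) rho(1)]]] by (simp add: power2_eq_square algebra_simps)
    ultimately show ?thesis by linarith
  qed
  have "real (card K) * (D * D * (1 - 2*\<rho>)) \<le> (\<Sum>i\<in>K. (a \<bullet> F i)^2)"
    using sum_bounded_below[of K "D * D * (1 - 2*\<rho>)" "\<lambda>i. (a \<bullet> F i)^2"] lowi by simp
  also have "\<dots> \<le> Q a" unfolding Q_def K_def by (rule sum_mono2) auto
  also have "\<dots> = real n * D" using Dq n0 by simp
  finally have "real (card K) * (D * D * (1 - 2*\<rho>)) \<le> real n * D" .
  then have h1: "D * (real (card K) * D * (1 - 2*\<rho>)) \<le> D * real n" by (simp add: algebra_simps)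
  have "real (card K) * D * (1 - 2*\<rho>) \<le> real n"
  proof -
    have "D > 0" using Dp by (smt (verit) of_nat_0_less_iff zero_less_card_finite)
    then show ?thesis using h1 by (simp add: mult_le_cancel_left_pos)
  qed
  moreover have "real (card K) * real CARD('p) * (1 - 2*\<rho>) \<le> real (card K) * D * (1 - 2*\<rho>)"
    using Dp rho by (intro mult_right_mono mult_left_mono) auto
  ultimately show ?thesis unfolding K_def by linarith
qed

theorem lemma2p2:
  fixes X :: "'a::metric_space set" and \<Theta> :: "'b::metric_space set"
    and f :: "'b \<Rightarrow> 'a \<Rightarrow> real^'p"
    and x :: "nat \<Rightarrow> 'a" and \<theta> :: "nat \<Rightarrow> 'b"
    and nst :: nat and \<epsilon> :: real
  assumes "compact X" and "compact \<Theta>"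
    and "\<And>t. t \<in> \<Theta> \<Longrightarrow> span (f t ` X) = UNIV"
    and "continuous_on (X \<times> \<Theta>) (\<lambda>(z, t). f t z)"
    and "CARD('p) \<ge> 2"
    and "\<And>i. i \<in> {1..nst} \<Longrightarrow> x i \<in> X"
    and "\<And>t. t \<in> \<Theta> \<Longrightarrow> pos_def (info_matrix f x nst t)"
    and "\<And>n. n \<ge> nst \<Longrightarrow> \<theta> n \<in> \<Theta>"
    and "\<And>n. n \<ge> nst \<Longrightarrow> x (Suc n) \<in> X \<and>
           (\<forall>z\<in>X. f (\<theta> n) z \<bullet> (matrix_inv (info_matrix f x n (\<theta> n)) *v f (\<theta> n) z)
                 \<le> f (\<theta> n) (x (Suc n)) \<bullet> (matrix_inv (info_matrix f x n (\<theta> n)) *v f (\<theta> n) (x (Suc n))))"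
    and "\<epsilon> > 0"
  shows "\<exists>d>0. \<exists>n0\<ge>nst. \<forall>n\<ge>n0. \<forall>S. S \<subseteq> X \<and> S \<noteq> {} \<and> diameter S \<le> d \<longrightarrow>
           emp_design x n S \<le> 1 / real CARD('p) + \<epsilon>"
proof -
  define p where "p = real CARD('p)"
  have p2: "p \<ge> 2" using assms(5) unfolding p_def by simp
  have th0: "\<theta> nst \<in> \<Theta>" using assms(8) by simp
  obtain k :: 'p where True by simp
  have ax: "axis k (1::real) \<noteq> 0" by (simp add: axis_eq_0_iff)
  have npos: "nst > 0"
  proof (rule ccontr)
    assume "\<not> nst > 0"
    then have "nst = 0" by simp
    then have "axis k 1 \<bullet> (info_matrix f x nst (\<theta> nst) *v axis k 1) = 0" by (simp add: info_bil)
    moreover have "axis k 1 \<bullet> (info_matrix f x nst (\<theta> nst) *v axis k 1) > 0"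
      using assms(7)[OF th0] ax unfolding pos_def_def by blast
    ultimately show False by simp
  qed
  have xall: "x i \<in> X" if "i \<ge> 1" for i
  proof (cases "i \<le> nst")
    case True then show ?thesis using assms(6) that by simp
  next
    case False
    then obtain m where "i = Suc m" "m \<ge> nst" by (metis Suc_le_D not_le_imp_less Suc_le_eq less_Suc_eq_le)
    then show ?thesis using assms(9) by blast
  qed
  have "\<exists>lam>0. \<forall>t\<in>\<Theta>. \<forall>v. lam * (norm v)^2 \<le> (\<Sum>i\<in>{1..nst}. (v \<bullet> f t (x i))^2)"
  proof (rule lam_exists[OF assms(2) _ assms(4)])
    show "\<Theta> \<noteq> {}" using th0 by blast
    show "x i \<in> X" if "i\<in>{1..nst}" for i using assms(6) that by blast
    show "(\<Sum>i\<in>{1..nst}. (v \<bullet> f t (x i))^2) > 0" if "t \<in> \<Theta>" "v \<noteq> 0" for t v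
    proof -
      have "v \<bullet> (info_matrix f x nst t *v v) > 0" using assms(7)[OF that(1)] that(2) unfolding pos_def_def by blast
      then show ?thesis using npos by (simp add: info_bil power2_eq_square zero_less_divide_iff)
    qed
  qed
  then obtain lam where lam: "lam > 0" and lamH: "\<And>t v. t\<in>\<Theta> \<Longrightarrow> lam * (norm v)^2 \<le> (\<Sum>i\<in>{1..nst}. (v \<bullet> f t (x i))^2)"
    by blast
  define \<sigma> where "\<sigma> = 1 / (1 + \<epsilon>/2)"
  define \<rho> where "\<rho> = (1 - \<sigma>) / 2"
  have \<sigma>: "0 < \<sigma>" "\<sigma> < 1" using assms(10) unfolding \<sigma>_def by (auto simp: field_simps)
  have \<rho>: "0 < \<rho>" "\<rho> \<le> 1/2" "1 - 2*\<rho> = \<sigma>" using \<sigma> unfolding \<rho>_def by (auto simp: field_simps)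
  define \<eta> where "\<eta> = \<rho> * sqrt (lam / real nst)"
  have \<eta>: "\<eta> > 0" unfolding \<eta>_def using \<rho> lam npos by simp
  obtain \<delta> where \<delta>: "\<delta> > 0" and unif: "\<And>t y z. t\<in>\<Theta> \<Longrightarrow> y\<in>X \<Longrightarrow> z\<in>X \<Longrightarrow> dist y z < \<delta> \<Longrightarrow> norm (f t y - f t z) < \<eta>"
    using unif_f[OF assms(1,2,4) \<eta>] by blast
  define d where "d = \<delta> / 2"
  define q where "q = (1 + \<epsilon>/2) / p"
  have kc: "real (card {i\<in>{1..n}. x i \<in> S}) \<le> q * real n"
    if n: "n \<ge> nst" and S: "S \<subseteq> X" "diameter S \<le> d" and xs: "x (Suc n) \<in> S" for n S
  proof -
    have bS: "bounded S" using S(1) compact_imp_bounded[OF assms(1)] bounded_subset by blast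
    have "real (card {i\<in>{1..n}. x i \<in> S}) * real CARD('p) * (1 - 2*\<rho>) \<le> real n"
    proof (rule key[where nst=nst and n=n and lam=lam and t="\<theta> n" and z="x (Suc n)" and X=X and S=S and \<eta>=\<eta> and \<rho>=\<rho> and f=f and x=x])
      show "nst > 0" by (rule npos)
      show "nst \<le> n" by (rule n)
      show "lam > 0" by (rule lam)
      show "lam * (norm v)^2 \<le> (\<Sum>i\<in>{1..nst}. (v \<bullet> f (\<theta> n) (x i))^2)" for v
        by (rule lamH[OF assms(8)[OF n]])
      show "\<eta> = \<rho> * sqrt (lam / real nst)" by (rule \<eta>_def)
      show "x i \<in> X" if "i\<in>{1..n}" for i using xall that by simp
      show "\<forall>y\<in>X. f (\<theta> n) y \<bullet> (matrix_inv (info_matrix f x n (\<theta> n)) *v f (\<theta> n) y)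
                 \<le> f (\<theta> n) (x (Suc n)) \<bullet> (matrix_inv (info_matrix f x n (\<theta> n)) *v f (\<theta> n) (x (Suc n)))"
        using assms(9)[OF n] by blast
      show "norm (f (\<theta> n) (x (Suc n)) - f (\<theta> n) (x i)) < \<eta>" if "i \<in> {1..n}" "x i \<in> S" for i
      proof (rule unif)
        show "\<theta> n \<in> \<Theta>" using assms(8)[OF n] .
        show "x (Suc n) \<in> X" using xs S by blast
        show "x i \<in> X" using that S by blast
        have "dist (x (Suc n)) (x i) \<le> diameter S" by (rule diameter_bounded_bound[OF bS xs that(2)])
        then show "dist (x (Suc n)) (x i) < \<delta>" using S(2) \<delta> unfolding d_def by simp
      qed
    qed (use \<rho> in auto)
    then have "real (card {i\<in>{1..n}. x i \<in> S}) * (p * \<sigma>) \<le> real n" using \<rho>(3) unfolding p_def by (simp add: mult_ac)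
    moreover have "p * \<sigma> > 0" using p2 \<sigma> by simp
    ultimately have "real (card {i\<in>{1..n}. x i \<in> S}) \<le> real n / (p * \<sigma>)" by (simp add: field_simps)
    also have "real n / (p * \<sigma>) = q * real n" unfolding q_def \<sigma>_def using p2 by (simp add: field_simps)
    finally show ?thesis .
  qed
  have cnt: "real (card {i\<in>{1..n}. x i \<in> S}) \<le> max (real nst) (q * real n + 1)"
    if n: "n \<ge> nst" and S: "S \<subseteq> X" "diameter S \<le> d" for n S
    using n
  proof (induction n rule: dec_induct)
    case base
    have "card {i\<in>{1..nst}. x i \<in> S} \<le> card {1..nst}" by (rule card_mono) auto
    then show ?case by simp
  next
    case (step m)
    show ?case
    proof (cases "x (Suc m) \<in> S")
      case True
      have "{i\<in>{1..Suc m}. x i \<in> S} = insert (Suc m) {i\<in>{1..m}. x i \<in> S}" using True by auto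
      then have "card {i\<in>{1..Suc m}. x i \<in> S} = Suc (card {i\<in>{1..m}. x i \<in> S})" by simp
      moreover have "real (card {i\<in>{1..m}. x i \<in> S}) \<le> q * real m" by (rule kc[OF step(1) S True])
      moreover have "q \<ge> 0" unfolding q_def using p2 assms(10) by simp
      ultimately show ?thesis by (simp add: algebra_simps)
    next
      case False
      have "{i\<in>{1..Suc m}. x i \<in> S} = {i\<in>{1..m}. x i \<in> S}" using False by (auto simp: le_Suc_eq)
      moreover have "q \<ge> 0" unfolding q_def using p2 assms(10) by simp
      ultimately have "real (card {i\<in>{1..Suc m}. x i \<in> S}) \<le> max (real nst) (q * real m + 1)" using step(3) by simp
      moreover have "max (real nst) (q * real m + 1) \<le> max (real nst) (q * real (Suc m) + 1)"
        using \<open>q \<ge> 0\<close> by (intro max.mono) (simp_all add: mult_left_mono)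
      ultimately show ?thesis by linarith
    qed
  qed
  define n0 where "n0 = nst + nat \<lceil>(real nst + 2) / \<epsilon>\<rceil>"
  have "\<forall>n\<ge>n0. \<forall>S. S \<subseteq> X \<and> S \<noteq> {} \<and> diameter S \<le> d \<longrightarrow> emp_design x n S \<le> 1 / real CARD('p) + \<epsilon>"
  proof (intro allI impI)
    fix n S assume n: "n \<ge> n0" and S: "S \<subseteq> X \<and> S \<noteq> {} \<and> diameter S \<le> d"
    have nn: "n \<ge> nst" using n unfolding n0_def by simp
    have "real n \<ge> real n0" using n by simp
    moreover have "real n0 = real nst + real (nat \<lceil>(real nst + 2) / \<epsilon>\<rceil>)" unfolding n0_def by simp
    moreover have "(real nst + 2) / \<epsilon> \<le> real (nat \<lceil>(real nst + 2) / \<epsilon>\<rceil>)" by (rule real_nat_ceiling_ge)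
    ultimately have "real n \<ge> (real nst + 2) / \<epsilon>" by linarith
    then have ne: "real n * \<epsilon> \<ge> real nst + 2" using assms(10) by (simp add: field_simps)
    have n0: "real n > 0" using nn npos by simp
    have c: "real (card {i\<in>{1..n}. x i \<in> S}) \<le> max (real nst) (q * real n + 1)" using cnt[OF nn] S by blast
    have "real n / p \<ge> 0" using p2 by simp
    then have b1: "real nst \<le> (1/p + \<epsilon>) * real n" using ne by (simp add: algebra_simps)
    have "q \<le> 1/p + \<epsilon>/2" unfolding q_def using p2 assms(10) by (simp add: field_simps)
    then have "q * real n \<le> (1/p + \<epsilon>/2) * real n" using n0 by (intro mult_right_mono) auto
    then have "q * real n + 1 \<le> (1/p + \<epsilon>/2) * real n + real n * \<epsilon> / 2" using ne by linarith
    then have b2: "q * real n + 1 \<le> (1/p + \<epsilon>) * real n" by (simp add: algebra_simps)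
    have "real (card {i\<in>{1..n}. x i \<in> S}) \<le> (1/p + \<epsilon>) * real n" using c b1 b2 by (auto simp: max_def split: if_splits)
    then show "emp_design x n S \<le> 1 / real CARD('p) + \<epsilon>"
      unfolding emp_design_def p_def using n0 by (simp add: divide_le_eq)
  qed
  moreover have "d > 0" unfolding d_def using \<delta> by simp
  moreover have "n0 \<ge> nst" unfolding n0_def by simp
  ultimately show ?thesis by blast
qed

end
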